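(* Fix $m\ge 2$. Assume that for all $(s,k)$ an $m$-odd-even merger $\mathrm{oe\_merge}^s_k$ of order $k$ on $s$ inputs is given. Define recursively, for $1\le k\le n$, the comparator network $\mathrm{oe\_sel}^n_k$ on input $\bar x\in X^n$ as follows. If $k=1$: output $\max^n(\bar x)$. If $k\ge 2$: choose integers $n_1\ge\dots\ge n_m\ge 0$ with $\sum_i n_i=n$ and $n_1<n$. Split $\bar x$ into consecutive blocks $\bar x^1,\dots,\bar x^m$ of lengths $n_1,\dots,n_m$. For each $i$ let $k_i=\min(k,n_i)$ and $\bar y^i=\mathrm{oe\_sel}^{n_i}_{k_i}(\bar x^i)$ (with $\bar y^i=\bar x^i$ if $k_i=0$). Let $s=\sum_ik_i$ and $\overline{out}=\mathrm{suff}(k_1+1,\bar y^1)::\dots::\mathrm{suff}(k_m+1,\bar y^m)$. Output $\mathrm{oe\_merge}^s_k(\langle \mathrm{pref}(k_1,\bar y^1),\dots,\mathrm{pref}(k_m,\bar y^m)\rangle)::\overline{out}$. Then for every choice of the splittings, $\mathrm{oe\_sel}^n_k$ is a $k$-selection network, i.e. for every $\bar x\in X^n$ the output is top $k$ sorted.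
   Context: $X$ is a totally ordered set. A sequence is sorted if it is non-increasing. $::$ is concatenation; $\mathrm{pref}(i,\bar x)=\langle x_1,\dots,x_i\rangle$, $\mathrm{suff}(i,\bar x)=\langle x_i,\dots,x_n\rangle$ (empty if $i>n$). A comparator network is a map on sequences obtained by composing sorters (which rearrange the values at chosen positions into non-increasing order) and fixed rearrangements of positions; it permutes its input. $\max^n$ is a comparator network on $n$ inputs whose first output is the maximum of the inputs. A sequence $\bar x\in X^n$ is top $k$ sorted ($k\le n$) if $\langle x_1,\dots,x_k\rangle$ is sorted and $x_i\ge x_j$ for all $i\le k<j$; by convention a sequence of length at most $k$ is top $k$ sorted iff it is sorted. A $k$-selection network on $n$ inputs is a comparator network whose output is top $k$ sorted for every input. An $m$-odd-even merger of order $k$ on $s$ inputs is a comparator network $f$ such that for every tuple $\langle\bar x^1,\dots,\bar x^m\rangle$ in which each $\bar x^i$ is top $k$ sorted and $\sum_i|\bar x^i|=s$, $f(\bar x^1::\dots::\bar x^m)$ is top $k$ sorted. *)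

theory Defs
  imports Main
begin

text \<open>Sequences over a totally ordered set are lists over a linorder type;
positions are 0-based (position i here is position i+1 in the paper).
"Sorted" means non-increasing.\<close>

definition sorted_dec :: "'a::linorder list \<Rightarrow> bool" where
  "sorted_dec xs \<longleftrightarrow> sorted_wrt (\<ge>) xs"

definition top_k_sorted :: "nat \<Rightarrow> 'a::linorder list \<Rightarrow> bool" where
  "top_k_sorted k xs \<longleftrightarrow>
     (if length xs \<le> k then sorted_dec xs
      else sorted_dec (take k xs) \<and>
           (\<forall>i j. i < k \<and> k \<le> j \<and> j < length xs \<longrightarrow> xs ! i \<ge> xs ! j))"

text \<open>A sorter on the set P of positions: the values at the positions in P are
rearranged into non-increasing order (in increasing order of positions); the
other positions are untouched.\<close>
definition sorter :: "nat set \<Rightarrow> 'a::linorder list \<Rightarrow> 'a list" where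
  "sorter P xs =
     (let vs = rev (sort (map (nth xs) (sorted_list_of_set P)))
      in map (\<lambda>i. if i \<in> P then vs ! card {p\<in>P. p < i} else xs ! i) [0..<length xs])"

definition rearrange :: "(nat \<Rightarrow> nat) \<Rightarrow> 'a list \<Rightarrow> 'a list" where
  "rearrange \<pi> xs = map (\<lambda>i. xs ! \<pi> i) [0..<length xs]"

inductive comp_net :: "nat \<Rightarrow> ('a::linorder list \<Rightarrow> 'a list) \<Rightarrow> bool" for n where
  cn_id: "comp_net n id"
| cn_sorter: "P \<subseteq> {..<n} \<Longrightarrow> comp_net n (sorter P)"
| cn_rearrange: "bij_betw \<pi> {..<n} {..<n} \<Longrightarrow> comp_net n (rearrange \<pi>)"
| cn_comp: "comp_net n f \<Longrightarrow> comp_net n g \<Longrightarrow> comp_net n (g \<circ> f)"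

definition is_max_net :: "nat \<Rightarrow> ('a::linorder list \<Rightarrow> 'a list) \<Rightarrow> bool" where
  "is_max_net n f \<longleftrightarrow> comp_net n f \<and>
     (\<forall>xs. length xs = n \<longrightarrow> hd (f xs) = Max (set xs))"

definition is_oe_merger :: "nat \<Rightarrow> nat \<Rightarrow> nat \<Rightarrow> ('a::linorder list \<Rightarrow> 'a list) \<Rightarrow> bool" where
  "is_oe_merger m k s f \<longleftrightarrow> comp_net s f \<and>
     (\<forall>xss. length xss = m \<and> (\<forall>xs\<in>set xss. top_k_sorted k xs) \<and>
            sum_list (map length xss) = s \<longrightarrow> top_k_sorted k (f (concat xss)))"

text \<open>One recursive step of oe_sel: ns = [n_1,...,n_m] are the block lengths,
fs!i is the network used on block i (ignored when n_i = 0), merge s k is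
the given merger oe_merge^s_k.\<close>
definition oe_step :: "(nat \<Rightarrow> nat \<Rightarrow> 'a list \<Rightarrow> 'a list) \<Rightarrow> nat \<Rightarrow> nat list
    \<Rightarrow> ('a list \<Rightarrow> 'a list) list \<Rightarrow> 'a list \<Rightarrow> 'a list" where
  "oe_step merge k ns fs xs =
     (let m = length ns;
          blocks = map (\<lambda>i. take (ns ! i) (drop (sum_list (take i ns)) xs)) [0..<m];
          ys = map (\<lambda>i. if ns ! i = 0 then blocks ! i else (fs ! i) (blocks ! i)) [0..<m];
          ks = map (\<lambda>i. min k (ns ! i)) [0..<m];
          s = sum_list ks
      in merge s k (concat (map (\<lambda>i. take (ks ! i) (ys ! i)) [0..<m]))
         @ concat (map (\<lambda>i. drop (ks ! i) (ys ! i)) [0..<m]))"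

text \<open>oe_sel m maxn merge n k f: f is one of the networks oe_sel^n_k obtained
by some choice of splittings (at every node of the recursion).\<close>
inductive oe_sel :: "nat \<Rightarrow> (nat \<Rightarrow> 'a::linorder list \<Rightarrow> 'a list)
    \<Rightarrow> (nat \<Rightarrow> nat \<Rightarrow> 'a list \<Rightarrow> 'a list) \<Rightarrow> nat \<Rightarrow> nat \<Rightarrow> ('a list \<Rightarrow> 'a list) \<Rightarrow> bool"
  for m maxn merge where
  sel_base: "1 \<le> n \<Longrightarrow> oe_sel m maxn merge n 1 (maxn n)"
| sel_step: "\<lbrakk>2 \<le> k; k \<le> n; length ns = m; sorted_wrt (\<ge>) ns; sum_list ns = n;
     hd ns < n; length fs = m;
     \<forall>i<m. 0 < ns ! i \<longrightarrow> oe_sel m maxn merge (ns ! i) (min k (ns ! i)) (fs ! i)\<rbrakk>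
   \<Longrightarrow> oe_sel m maxn merge n k (oe_step merge k ns fs)"

end

theory Submission imports Defs "HOL-Library.Multiset" begin

lemma sorted_list_card:
  assumes "finite P" "c < length (sorted_list_of_set P)"
  shows "card {p\<in>P. p < sorted_list_of_set P ! c} = c"
proof -
  let ?L = "sorted_list_of_set P"
  have "{p\<in>P. p < ?L ! c} = set (take c ?L)"
  proof (intro set_eqI iffI)
    fix p assume "p \<in> {p\<in>P. p < ?L ! c}"
    then have pP: "p \<in> set ?L" and lt: "p < ?L ! c" using assms by auto
    then obtain d where d: "d < length ?L" "?L ! d = p" by (auto simp: in_set_conv_nth)
    have "d < c"
    proof (rule ccontr)
      assume "\<not> d < c"
      then have "c \<le> d" by simp
      then have "?L ! c \<le> ?L ! d" using d sorted_nth_mono[OF sorted_sorted_list_of_set, of c d P] by simp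
      then show False using lt d by simp
    qed
    then show "p \<in> set (take c ?L)" using d by (auto simp: in_set_conv_nth intro!: exI[of _ d])
  next
    fix p assume "p \<in> set (take c ?L)"
    then obtain d where d: "d < c" "?L ! d = p" using assms by (auto simp: in_set_conv_nth)
    have "?L ! d < ?L ! c"
      using d(1) assms(2) strict_sorted_list_of_set[of P] unfolding sorted_wrt_iff_nth_less by blast
    moreover have "p \<in> P" using d assms by (metis order.strict_trans nth_mem set_sorted_list_of_set)
    ultimately show "p \<in> {p\<in>P. p < ?L ! c}" using d by auto
  qed
  then show ?thesis using assms by (simp add: distinct_card)
qed

lemma mset_map_split: "mset (map h xs) = mset (map h (filter P xs)) + mset (map h (filter (\<lambda>x. \<not> P x) xs))"
  by (induction xs) auto

lemma mset_sorter:
  assumes "P \<subseteq> {..<length xs}"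
  shows "mset (sorter P xs) = mset xs"
proof -
  let ?n = "length xs"
  let ?L = "sorted_list_of_set P"
  define vs where "vs = rev (sort (map (nth xs) ?L))"
  define h where "h i = (if i \<in> P then vs ! card {p\<in>P. p < i} else xs ! i)" for i
  have fin: "finite P" using assms finite_subset by blast
  have s: "sorter P xs = map h [0..<?n]" unfolding sorter_def h_def vs_def Let_def by simp
  have filt: "filter (\<lambda>i. i \<in> P) [0..<?n] = ?L"
  proof -
    have "set (filter (\<lambda>i. i \<in> P) [0..<?n]) = P" using assms by auto
    moreover have "distinct (filter (\<lambda>i. i \<in> P) [0..<?n])" by simp
    ultimately have "length (filter (\<lambda>i. i \<in> P) [0..<?n]) = card P" by (metis distinct_card)
    then show ?thesis using assms fin \<open>set _ = P\<close>
      by (intro sorted_list_of_set_unique[THEN iffD1, symmetric]) (auto intro: sorted_wrt_filter)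
  qed
  have lv: "length vs = length ?L" by (simp add: vs_def)
  have mh: "map h ?L = vs"
  proof (rule nth_equalityI)
    show "length (map h ?L) = length vs" using lv by simp
    fix c assume "c < length (map h ?L)"
    then have c: "c < length ?L" by simp
    have "?L ! c \<in> P" using c fin by (metis nth_mem set_sorted_list_of_set)
    then show "map h ?L ! c = vs ! c" using c fin by (simp add: h_def sorted_list_card)
  qed
  have mh2: "map h (filter (\<lambda>i. i \<notin> P) [0..<?n]) = map (nth xs) (filter (\<lambda>i. i \<notin> P) [0..<?n])"
    by (auto simp: h_def)
  have "mset (map h [0..<?n]) = mset (map h (filter (\<lambda>i. i \<in> P) [0..<?n])) + mset (map h (filter (\<lambda>i. \<not> i \<in> P) [0..<?n]))"
    by (rule mset_map_split)
  also have "\<dots> = mset (map (nth xs) (filter (\<lambda>i. i \<in> P) [0..<?n])) + mset (map (nth xs) (filter (\<lambda>i. \<not> i \<in> P) [0..<?n]))"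
  proof -
    have "mset (map h (filter (\<lambda>i. i \<in> P) [0..<?n])) = mset (map (nth xs) (filter (\<lambda>i. i \<in> P) [0..<?n]))"
      unfolding filt mh vs_def by simp
    then show ?thesis by (simp only: mh2)
  qed
  also have "\<dots> = mset (map (nth xs) [0..<?n])"
    by (rule mset_map_split[symmetric])
  also have "\<dots> = mset xs" by (simp add: map_nth)
  finally show ?thesis using s by simp
qed

lemma mset_rearrange:
  assumes "bij_betw \<pi> {..<length xs} {..<length xs}"
  shows "mset (rearrange \<pi> xs) = mset xs"
proof -
  let ?n = "length xs"
  have "mset (map \<pi> [0..<?n]) = mset [0..<?n]"
  proof -
    have "mset (map \<pi> [0..<?n]) = image_mset \<pi> (mset_set {..<?n})"
      by (simp add: atLeast_upt)
    also have "\<dots> = mset_set (\<pi> ` {..<?n})"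
      using assms by (simp add: bij_betw_def image_mset_mset_set)
    also have "\<dots> = mset [0..<?n]" using assms by (simp add: bij_betw_def atLeast_upt)
    finally show ?thesis .
  qed
  then have "mset (map (nth xs) (map \<pi> [0..<?n])) = mset (map (nth xs) [0..<?n])"
    by (metis mset_map)
  then show ?thesis by (simp add: rearrange_def map_nth comp_def)
qed

lemma comp_net_mset:
  assumes "comp_net n g" shows "length xs = n \<Longrightarrow> mset (g xs) = mset xs"
  using assms
proof (induction arbitrary: xs)
  case cn_id then show ?case by simp
next
  case (cn_sorter P) then show ?case by (simp add: mset_sorter)
next
  case (cn_rearrange \<pi>) then show ?case by (simp add: mset_rearrange)
next
  case (cn_comp f g)
  then have "mset (f xs) = mset xs" by simp
  moreover then have "length (f xs) = n" using cn_comp by (metis size_mset)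
  ultimately show ?case using cn_comp by simp
qed

lemma topk_intro:
  assumes "sorted_dec (take k xs)" "\<forall>i j. i < k \<and> k \<le> j \<and> j < length xs \<longrightarrow> xs ! j \<le> xs ! i"
  shows "top_k_sorted k xs"
  using assms unfolding top_k_sorted_def by auto

lemma topk_dest:
  assumes "top_k_sorted k xs"
  shows "sorted_dec (take k xs)" "\<And>i j. i < k \<Longrightarrow> k \<le> j \<Longrightarrow> j < length xs \<Longrightarrow> xs ! j \<le> xs ! i"
  using assms unfolding top_k_sorted_def by (auto split: if_splits)

lemma topk_ge:
  fixes M :: "'a::linorder list"
  assumes "top_k_sorted k M" "0 < k" "k \<le> length M" "k \<le> length (filter (\<lambda>x. z \<le> x) M)" "i < k"
  shows "z \<le> M ! i"
proof -
  have sd: "sorted_dec (take k M)" and tk: "\<And>i j. i < k \<Longrightarrow> k \<le> j \<Longrightarrow> j < length M \<Longrightarrow> M ! j \<le> M ! i"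
    using topk_dest[OF assms(1)] by auto
  have last: "z \<le> M ! (k - 1)"
  proof (rule ccontr)
    assume "\<not> z \<le> M ! (k - 1)"
    then have lt: "M ! (k - 1) < z" by simp
    have all: "\<forall>x\<in>set (drop (k - 1) M). x < z"
    proof
      fix x assume "x \<in> set (drop (k - 1) M)"
      then obtain q where q: "q < length M - (k - 1)" "x = M ! (k - 1 + q)"
        by (auto simp: in_set_conv_nth)
      show "x < z"
      proof (cases q)
        case 0 then show ?thesis using q lt by simp
      next
        case (Suc q')
        then have "M ! (k - 1 + q) \<le> M ! (k - 1)" using tk[of "k - 1" "k - 1 + q"] q assms(2) by simp
        then show ?thesis using q lt by simp
      qed
    qed
    have "M = take (k - 1) M @ drop (k - 1) M" by simp
    then have "filter (\<lambda>x. z \<le> x) M = filter (\<lambda>x. z \<le> x) (take (k - 1) M) @ filter (\<lambda>x. z \<le> x) (drop (k - 1) M)"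
      by (metis filter_append)
    moreover have "filter (\<lambda>x. z \<le> x) (drop (k - 1) M) = []" using all by (auto simp: filter_empty_conv)
    ultimately have "length (filter (\<lambda>x. z \<le> x) M) \<le> k - 1"
      by (metis append_Nil2 length_filter_le length_take min.bounded_iff nle_le)
    then show False using assms(2,4) by simp
  qed
  have "M ! (k - 1) \<le> M ! i"
  proof (cases "i = k - 1")
    case True then show ?thesis by simp
  next
    case False
    then have "i < k - 1" using assms(5) by simp
    then have "take k M ! (k - 1) \<le> take k M ! i" using sd assms unfolding sorted_dec_def
      by (simp add: sorted_wrt_iff_nth_less)
    then show ?thesis using assms \<open>i < k - 1\<close> by simp
  qed
  then show ?thesis using last by simp
qed

lemma sum_upt: "sum_list (map f [0..<m]) = (\<Sum>i<m. f i)"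
  by (simp add: interv_sum_list_conv_sum_set_nat atLeast0LessThan)

lemma step_correct:
  fixes merge :: "nat \<Rightarrow> nat \<Rightarrow> 'a::linorder list \<Rightarrow> 'a list"
  assumes merge: "\<forall>s k. is_oe_merger m k s (merge s k)"
  and k2: "2 \<le> k" and kn: "k \<le> n" and lns: "length ns = m" and sumn: "sum_list ns = n"
  and IH: "\<forall>i<m. 0 < ns!i \<longrightarrow> (\<forall>xs. length xs = ns!i \<longrightarrow>
             length ((fs!i) xs) = ns!i \<and> top_k_sorted (min k (ns!i)) ((fs!i) xs))"
  and lxs: "length xs = n"
  shows "length (oe_step merge k ns fs xs) = n \<and> top_k_sorted k (oe_step merge k ns fs xs)"
proof -
  define blocks where "blocks = map (\<lambda>i. take (ns ! i) (drop (sum_list (take i ns)) xs)) [0..<m]"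
  define ys where "ys = map (\<lambda>i. if ns ! i = 0 then blocks ! i else (fs ! i) (blocks ! i)) [0..<m]"
  define ks where "ks = map (\<lambda>i. min k (ns ! i)) [0..<m]"
  define s where "s = sum_list ks"
  define pre where "pre = map (\<lambda>i. take (ks ! i) (ys ! i)) [0..<m]"
  define out where "out = concat (map (\<lambda>i. drop (ks ! i) (ys ! i)) [0..<m])"
  define M where "M = merge s k (concat pre)"
  have eq: "oe_step merge k ns fs xs = M @ out"
    unfolding oe_step_def Let_def M_def out_def pre_def s_def ks_def ys_def blocks_def lns by simp
  have nsum: "n = (\<Sum>i<m. ns ! i)" using sumn lns by (simp add: sum_list_sum_nth atLeast0LessThan)
  have lb: "length (blocks ! i) = ns ! i" if "i < m" for i
  proof -
    have "sum_list (take (Suc i) ns) \<le> sum_list ns"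
      by (metis append_take_drop_id le_add1 sum_list_append)
    moreover have "sum_list (take (Suc i) ns) = sum_list (take i ns) + ns ! i"
      using that lns by (simp add: take_Suc_conv_app_nth)
    ultimately show ?thesis using that lxs sumn by (simp add: blocks_def)
  qed
  have ly: "length (ys ! i) = ns ! i" if "i < m" for i
    using that lb IH by (simp add: ys_def)
  have ksi: "ks ! i = min k (ns ! i)" if "i < m" for i using that by (simp add: ks_def)
  have tky: "top_k_sorted (ks ! i) (ys ! i)" if "i < m" "0 < ns ! i" for i
    using that lb IH ksi by (simp add: ys_def)
  have pre_ok: "top_k_sorted k p" if pin: "p \<in> set pre" for p
  proof -
    obtain i where i: "i < m" "p = take (ks ! i) (ys ! i)" using pin unfolding pre_def by auto
    have "sorted_dec (take (ks ! i) (ys ! i))"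
    proof (cases "ns ! i = 0")
      case True then show ?thesis using i ksi by (simp add: sorted_dec_def)
    next
      case False then show ?thesis using tky[of i] i topk_dest by auto
    qed
    moreover have "length p \<le> k" using i ksi ly by simp
    ultimately show ?thesis using i unfolding top_k_sorted_def by simp
  qed
  have spre: "sum_list (map length pre) = s"
  proof -
    have "map length pre = ks" using ly ksi by (auto simp: pre_def ks_def intro!: nth_equalityI)
    then show ?thesis by (simp add: s_def)
  qed
  have lpre: "length pre = m" by (simp add: pre_def)
  have mer: "is_oe_merger m k s (merge s k)" using merge by simp
  have tkM: "top_k_sorted k M"
    using mer pre_ok spre lpre unfolding is_oe_merger_def M_def by blast
  have msM: "mset M = mset (concat pre)"
    using mer spre comp_net_mset[of s "merge s k" "concat pre"] unfolding is_oe_merger_def M_def by (simp add: length_concat)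
  have lM: "length M = s" using msM spre by (metis length_concat size_mset)
  have ssum: "s = (\<Sum>i<m. min k (ns ! i))" by (simp add: s_def ks_def sum_upt)
  have sk: "k \<le> s"
  proof (cases "\<exists>i<m. k \<le> ns ! i")
    case True
    then obtain i where i: "i < m" "k \<le> ns ! i" by blast
    have "min k (ns ! i) \<le> (\<Sum>i<m. min k (ns ! i))"
      using i by (intro member_le_sum) auto
    then show ?thesis using i ssum by simp
  next
    case False
    then have "(\<Sum>i<m. min k (ns ! i)) = (\<Sum>i<m. ns ! i)" by (intro sum.cong) auto
    then show ?thesis using ssum nsum kn by simp
  qed
  have lout: "length out = (\<Sum>i<m. ns ! i - min k (ns ! i))"
  proof -
    have "length out = (\<Sum>i<m. length (drop (ks ! i) (ys ! i)))"
      by (simp add: out_def length_concat sum_upt comp_def)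
    also have "\<dots> = (\<Sum>i<m. ns ! i - min k (ns ! i))" using ly ksi by (intro sum.cong) auto
    finally show ?thesis .
  qed
  have len: "length (M @ out) = n"
  proof -
    have "s + length out = (\<Sum>i<m. min k (ns ! i) + (ns ! i - min k (ns ! i)))"
      using ssum lout by (simp only: sum.distrib[symmetric])
    also have "\<dots> = n" using nsum by simp
    finally show ?thesis using lM by simp
  qed
  have sdM: "sorted_dec (take k M)" using topk_dest(1)[OF tkM] .
  have main: "(M @ out) ! j \<le> (M @ out) ! i" if ij: "i < k" "k \<le> j" "j < length (M @ out)" for i j
  proof -
    have Mi: "(M @ out) ! i = M ! i" using ij sk lM by (simp add: nth_append)
    show ?thesis
    proof (cases "j < s")
      case True
      then show ?thesis using Mi ij lM topk_dest(2)[OF tkM, of i j] by (simp add: nth_append)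
    next
      case False
      define z where "z = out ! (j - s)"
      have zj: "(M @ out) ! j = z" using False lM by (simp add: nth_append z_def)
      have "z \<in> set out" using False ij lM by (simp add: z_def)
      then obtain t where t: "t < m" "z \<in> set (drop (ks ! t) (ys ! t))" by (auto simp: out_def)
      then have "ks ! t < ns ! t" using ly by (metis drop_all empty_iff leI list.set(1))
      then have kt: "ks ! t = k" "k < ns ! t" using ksi t by auto
      then have tk: "top_k_sorted k (ys ! t)" using tky t by auto
      obtain q where q: "q < length (ys ! t) - k" "z = ys ! t ! (k + q)"
        using t(2) kt by (auto simp: in_set_conv_nth)
      have ge: "\<forall>x\<in>set (take k (ys ! t)). z \<le> x"
      proof
        fix x assume "x \<in> set (take k (ys ! t))"
        then obtain p where p: "p < k" "x = ys ! t ! p" using kt ly t by (auto simp: in_set_conv_nth)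
        show "z \<le> x" using topk_dest(2)[OF tk, of p "k + q"] p q by simp
      qed
      have lt: "length (take k (ys ! t)) = k" using kt ly t by simp
      have "k = length (filter (\<lambda>x. z \<le> x) (take k (ys ! t)))"
        using ge lt by (metis filter_True)
      also have "\<dots> \<le> sum_list (map (\<lambda>p. length (filter (\<lambda>x. z \<le> x) p)) pre)"
      proof -
        have "take k (ys ! t) \<in> set pre" using t kt by (force simp: pre_def)
        then show ?thesis by (intro member_le_sum_list) auto
      qed
      also have "\<dots> = length (filter (\<lambda>x. z \<le> x) (concat pre))"
        by (induction pre) auto
      also have "\<dots> = length (filter (\<lambda>x. z \<le> x) M)"
        using msM by (metis mset_filter size_mset)
      finally have cnt: "k \<le> length (filter (\<lambda>x. z \<le> x) M)" .
      have "z \<le> M ! i" using topk_ge[OF tkM _ _ cnt ij(1)] k2 sk lM by simp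
      then show ?thesis using zj Mi by simp
    qed
  qed
  have "top_k_sorted k (M @ out)"
    using sdM sk lM main by (intro topk_intro) auto
  then show ?thesis using eq len by simp
qed

lemma sel_correct:
  fixes maxn :: "nat \<Rightarrow> 'a::linorder list \<Rightarrow> 'a list"
  assumes "oe_sel m maxn merge n k f"
    and mx: "\<forall>n\<ge>1. is_max_net n (maxn n)"
    and mg: "\<forall>s k. is_oe_merger m k s (merge s k)"
  shows "\<forall>xs. length xs = n \<longrightarrow> length (f xs) = n \<and> top_k_sorted k (f xs)"
  using assms(1)
proof induction
  case (sel_base n)
  show ?case
  proof (intro allI impI)
    fix xs :: "'a list" assume lx: "length xs = n"
    have net: "is_max_net n (maxn n)" using mx sel_base by simp
    then have ms: "mset (maxn n xs) = mset xs" using lx comp_net_mset unfolding is_max_net_def by blast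
    have hd: "hd (maxn n xs) = Max (set xs)" using net lx unfolding is_max_net_def by blast
    have st: "set (maxn n xs) = set xs" using ms by (metis set_mset_mset)
    have ln: "length (maxn n xs) = n" using ms lx by (metis size_mset)
    have "top_k_sorted 1 (maxn n xs)"
    proof (rule topk_intro)
      show "sorted_dec (take 1 (maxn n xs))" by (cases "maxn n xs") (auto simp: sorted_dec_def)
      show "\<forall>i j::nat. i < 1 \<and> 1 \<le> j \<and> j < length (maxn n xs) \<longrightarrow> maxn n xs ! j \<le> maxn n xs ! i"
      proof (intro allI impI)
        fix i j :: nat assume ij: "i < 1 \<and> 1 \<le> j \<and> j < length (maxn n xs)"
        then have ne: "maxn n xs \<noteq> []" by auto
        have "maxn n xs ! j \<in> set xs" using ij st by (metis nth_mem)
        then have "maxn n xs ! j \<le> Max (set xs)" by simp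
        then show "maxn n xs ! j \<le> maxn n xs ! i" using ij hd ne by (simp add: hd_conv_nth)
      qed
    qed
    then show "length (maxn n xs) = n \<and> top_k_sorted 1 (maxn n xs)" using ln by simp
  qed
next
  case (sel_step k n ns fs)
  show ?case
  proof (intro allI impI)
    fix xs :: "'a list" assume "length xs = n"
    then show "length (oe_step merge k ns fs xs) = n \<and> top_k_sorted k (oe_step merge k ns fs xs)"
      using sel_step mg by (intro step_correct[of m merge k n ns fs]) auto
  qed
qed

theorem mainTheorem4:
  fixes m :: nat
    and maxn :: "nat \<Rightarrow> 'a::linorder list \<Rightarrow> 'a list"
    and merge :: "nat \<Rightarrow> nat \<Rightarrow> 'a list \<Rightarrow> 'a list"
  assumes "2 \<le> m"
    and "\<forall>n\<ge>1. is_max_net n (maxn n)"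
    and "\<forall>s k. is_oe_merger m k s (merge s k)"
    and "1 \<le> k" and "k \<le> n"
    and "oe_sel m maxn merge n k f"
    and "length xs = n"
  shows "top_k_sorted k (f xs)"
  using sel_correct[OF assms(6,2,3)] assms(7) by blast

end
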